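(* Let $R$ be a commutative ring with identity, $\mathcal S$ an associative $R$-algebra with identity and $\mathcal M$ a bimodule over $\mathcal S$. For $x\in\mathcal S$ let $T(x)=\{m\in\mathcal M: m(xa-ax)=0\text{ for all } a\in\mathcal S\}$. Then $T(x)$ is a subbimodule of $\mathcal M$. *)

theory Defs
  imports "HOL-Algebra.Module"
begin

definition r_algebra :: "('r, 'x) ring_scheme \<Rightarrow> ('r, 's) module \<Rightarrow> bool" where
  "r_algebra R S \<longleftrightarrow> cring R \<and> ring S \<and> module R S \<and>
     (\<forall>r\<in>carrier R. \<forall>a\<in>carrier S. \<forall>b\<in>carrier S.
        (r \<odot>\<^bsub>S\<^esub> a) \<otimes>\<^bsub>S\<^esub> b = r \<odot>\<^bsub>S\<^esub> (a \<otimes>\<^bsub>S\<^esub> b) \<and>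
        a \<otimes>\<^bsub>S\<^esub> (r \<odot>\<^bsub>S\<^esub> b) = r \<odot>\<^bsub>S\<^esub> (a \<otimes>\<^bsub>S\<^esub> b))"

definition bimodule ::
  "('r, 'x) ring_scheme \<Rightarrow> ('r, 's) module \<Rightarrow> ('r, 'm) module \<Rightarrow>
   ('s \<Rightarrow> 'm \<Rightarrow> 'm) \<Rightarrow> ('m \<Rightarrow> 's \<Rightarrow> 'm) \<Rightarrow> bool" where
  "bimodule R S M lact ract \<longleftrightarrow> module R M \<and>
    (\<forall>s\<in>carrier S. \<forall>m\<in>carrier M. lact s m \<in> carrier M \<and> ract m s \<in> carrier M) \<and>
    (\<forall>s\<in>carrier S. \<forall>t\<in>carrier S. \<forall>m\<in>carrier M.
        lact (s \<oplus>\<^bsub>S\<^esub> t) m = lact s m \<oplus>\<^bsub>M\<^esub> lact t m \<and>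
        ract m (s \<oplus>\<^bsub>S\<^esub> t) = ract m s \<oplus>\<^bsub>M\<^esub> ract m t \<and>
        lact (s \<otimes>\<^bsub>S\<^esub> t) m = lact s (lact t m) \<and>
        ract m (s \<otimes>\<^bsub>S\<^esub> t) = ract (ract m s) t) \<and>
    (\<forall>s\<in>carrier S. \<forall>m\<in>carrier M. \<forall>n\<in>carrier M.
        lact s (m \<oplus>\<^bsub>M\<^esub> n) = lact s m \<oplus>\<^bsub>M\<^esub> lact s n \<and>
        ract (m \<oplus>\<^bsub>M\<^esub> n) s = ract m s \<oplus>\<^bsub>M\<^esub> ract n s) \<and>
    (\<forall>m\<in>carrier M. lact \<one>\<^bsub>S\<^esub> m = m \<and> ract m \<one>\<^bsub>S\<^esub> = m) \<and>
    (\<forall>s\<in>carrier S. \<forall>t\<in>carrier S. \<forall>m\<in>carrier M.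
        ract (lact s m) t = lact s (ract m t)) \<and>
    (\<forall>r\<in>carrier R. \<forall>s\<in>carrier S. \<forall>m\<in>carrier M.
        r \<odot>\<^bsub>M\<^esub> (lact s m) = lact (r \<odot>\<^bsub>S\<^esub> s) m \<and>
        lact (r \<odot>\<^bsub>S\<^esub> s) m = lact s (r \<odot>\<^bsub>M\<^esub> m) \<and>
        r \<odot>\<^bsub>M\<^esub> (ract m s) = ract m (r \<odot>\<^bsub>S\<^esub> s) \<and>
        ract m (r \<odot>\<^bsub>S\<^esub> s) = ract (r \<odot>\<^bsub>M\<^esub> m) s)"

definition subbimodule ::
  "'m set \<Rightarrow> ('r, 'x) ring_scheme \<Rightarrow> ('r, 's) module \<Rightarrow> ('r, 'm) module \<Rightarrow>
   ('s \<Rightarrow> 'm \<Rightarrow> 'm) \<Rightarrow> ('m \<Rightarrow> 's \<Rightarrow> 'm) \<Rightarrow> bool" where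
  "subbimodule N R S M lact ract \<longleftrightarrow> submodule N R M \<and>
    (\<forall>s\<in>carrier S. \<forall>m\<in>N. lact s m \<in> N \<and> ract m s \<in> N)"

definition Tset ::
  "('r, 's) module \<Rightarrow> ('r, 'm) module \<Rightarrow> ('m \<Rightarrow> 's \<Rightarrow> 'm) \<Rightarrow> 's \<Rightarrow> 'm set" where
  "Tset S M ract x = {m \<in> carrier M. \<forall>a\<in>carrier S.
      ract m (x \<otimes>\<^bsub>S\<^esub> a \<ominus>\<^bsub>S\<^esub> a \<otimes>\<^bsub>S\<^esub> x) = \<zero>\<^bsub>M\<^esub>}"

end

theory Submission
  imports Defs
begin

lemma (in abelian_group) ag_helper:
  "A \<in> carrier G \<Longrightarrow> B \<in> carrier G \<Longrightarrow> (\<ominus> A = B \<oplus> (\<ominus> A \<oplus> \<ominus> B)) = True"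
  by (simp add: a_comm[of "\<ominus> A" "\<ominus> B"] r_neg2)

theorem lemma3p16:
  fixes R :: "('r, 'x) ring_scheme" and S :: "('r, 's) module" and M :: "('r, 'm) module"
    and lact :: "'s \<Rightarrow> 'm \<Rightarrow> 'm" and ract :: "'m \<Rightarrow> 's \<Rightarrow> 'm"
  assumes "cring R"
    and "r_algebra R S"
    and "bimodule R S M lact ract"
    and "x \<in> carrier S"
  shows "subbimodule (Tset S M ract x) R S M lact ract"
proof -
  have cl: "\<And>s m. s \<in> carrier S \<Longrightarrow> m \<in> carrier M \<Longrightarrow> lact s m \<in> carrier M \<and> ract m s \<in> carrier M"
    and sadd: "\<And>s t m. s \<in> carrier S \<Longrightarrow> t \<in> carrier S \<Longrightarrow> m \<in> carrier M \<Longrightarrow>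
        ract m (s \<oplus>\<^bsub>S\<^esub> t) = ract m s \<oplus>\<^bsub>M\<^esub> ract m t \<and>
        ract m (s \<otimes>\<^bsub>S\<^esub> t) = ract (ract m s) t"
    and madd: "\<And>s m n. s \<in> carrier S \<Longrightarrow> m \<in> carrier M \<Longrightarrow> n \<in> carrier M \<Longrightarrow>
        lact s (m \<oplus>\<^bsub>M\<^esub> n) = lact s m \<oplus>\<^bsub>M\<^esub> lact s n \<and>
        ract (m \<oplus>\<^bsub>M\<^esub> n) s = ract m s \<oplus>\<^bsub>M\<^esub> ract n s"
    and comm: "\<And>s t m. s \<in> carrier S \<Longrightarrow> t \<in> carrier S \<Longrightarrow> m \<in> carrier M \<Longrightarrow>
        ract (lact s m) t = lact s (ract m t)"
    and sc: "\<And>r s m. r \<in> carrier R \<Longrightarrow> s \<in> carrier S \<Longrightarrow> m \<in> carrier M \<Longrightarrow>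
        r \<odot>\<^bsub>M\<^esub> (ract m s) = ract m (r \<odot>\<^bsub>S\<^esub> s) \<and>
        ract m (r \<odot>\<^bsub>S\<^esub> s) = ract (r \<odot>\<^bsub>M\<^esub> m) s"
    and modM: "module R M"
    using assms(3) unfolding bimodule_def by blast+
  interpret M: module R M by (rule modM)
  interpret S: ring S using assms(2) unfolding r_algebra_def by blast
  have zero_gen: "\<And>y. y \<in> carrier M \<Longrightarrow> y = y \<oplus>\<^bsub>M\<^esub> y \<Longrightarrow> y = \<zero>\<^bsub>M\<^esub>"
    by simp
  have lz: "\<And>s. s \<in> carrier S \<Longrightarrow> lact s \<zero>\<^bsub>M\<^esub> = \<zero>\<^bsub>M\<^esub>"
    by (metis zero_gen cl madd M.zero_closed M.r_zero)
  have rz: "\<And>s. s \<in> carrier S \<Longrightarrow> ract \<zero>\<^bsub>M\<^esub> s = \<zero>\<^bsub>M\<^esub>"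
    by (metis zero_gen cl madd M.zero_closed M.r_zero)
  have rz2: "\<And>m. m \<in> carrier M \<Longrightarrow> ract m \<zero>\<^bsub>S\<^esub> = \<zero>\<^bsub>M\<^esub>"
    by (metis zero_gen cl sadd S.zero_closed S.r_zero)
  have rneg: "\<And>m w. m \<in> carrier M \<Longrightarrow> w \<in> carrier S \<Longrightarrow> ract m (\<ominus>\<^bsub>S\<^esub> w) = \<ominus>\<^bsub>M\<^esub> ract m w"
  proof -
    fix m w assume m: "m \<in> carrier M" and w: "w \<in> carrier S"
    have "ract m w \<oplus>\<^bsub>M\<^esub> ract m (\<ominus>\<^bsub>S\<^esub> w) = \<zero>\<^bsub>M\<^esub>"
      using sadd[of w "\<ominus>\<^bsub>S\<^esub> w" m] m w rz2 by (simp add: S.r_neg)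
    thus "ract m (\<ominus>\<^bsub>S\<^esub> w) = \<ominus>\<^bsub>M\<^esub> ract m w"
      using m w cl by (metis M.minus_unique M.l_neg M.a_inv_closed S.a_inv_closed)
  qed
  have mneg: "\<And>m s. m \<in> carrier M \<Longrightarrow> s \<in> carrier S \<Longrightarrow> ract (\<ominus>\<^bsub>M\<^esub> m) s = \<ominus>\<^bsub>M\<^esub> ract m s"
  proof -
    fix m s assume m: "m \<in> carrier M" and s: "s \<in> carrier S"
    have "ract m s \<oplus>\<^bsub>M\<^esub> ract (\<ominus>\<^bsub>M\<^esub> m) s = \<zero>\<^bsub>M\<^esub>"
      using madd[of s m "\<ominus>\<^bsub>M\<^esub> m"] m s rz by (simp add: M.r_neg)
    thus "ract (\<ominus>\<^bsub>M\<^esub> m) s = \<ominus>\<^bsub>M\<^esub> ract m s"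
      using m s cl by (metis M.minus_unique M.l_neg M.a_inv_closed)
  qed
  have rsc: "\<And>r m s. r \<in> carrier R \<Longrightarrow> m \<in> carrier M \<Longrightarrow> s \<in> carrier S \<Longrightarrow>
      ract (r \<odot>\<^bsub>M\<^esub> m) s = r \<odot>\<^bsub>M\<^esub> ract m s"
    using sc by metis
  have mz: "\<ominus>\<^bsub>M\<^esub> \<zero>\<^bsub>M\<^esub> = \<zero>\<^bsub>M\<^esub>"
    by (metis M.l_neg M.zero_closed M.r_zero M.a_inv_closed)
  let ?d = "\<lambda>a. x \<otimes>\<^bsub>S\<^esub> a \<ominus>\<^bsub>S\<^esub> a \<otimes>\<^bsub>S\<^esub> x"
  have dc: "\<And>a. a \<in> carrier S \<Longrightarrow> ?d a \<in> carrier S" using assms(4) by simp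
  have ident: "\<And>s a. s \<in> carrier S \<Longrightarrow> a \<in> carrier S \<Longrightarrow>
     s \<otimes>\<^bsub>S\<^esub> ?d a = (\<ominus>\<^bsub>S\<^esub> ?d s) \<otimes>\<^bsub>S\<^esub> a \<oplus>\<^bsub>S\<^esub> ?d (s \<otimes>\<^bsub>S\<^esub> a)"
    using assms(4)
    apply (simp add: a_minus_def S.r_distr S.l_distr S.r_minus S.l_minus S.m_assoc S.minus_add S.a_ac)
    by (simp add: S.ag_helper)
  have T: "\<And>m. m \<in> Tset S M ract x \<longleftrightarrow> m \<in> carrier M \<and> (\<forall>a\<in>carrier S. ract m (?d a) = \<zero>\<^bsub>M\<^esub>)"
    unfolding Tset_def by simp
  show ?thesis
    unfolding subbimodule_def
  proof (intro conjI ballI)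
    show "submodule (Tset S M ract x) R M"
    proof (rule M.submoduleI)
      show "Tset S M ract x \<subseteq> carrier M" using T by blast
      show "\<zero>\<^bsub>M\<^esub> \<in> Tset S M ract x" using T rz dc by simp
      show "\<ominus>\<^bsub>M\<^esub> a \<in> Tset S M ract x" if "a \<in> Tset S M ract x" for a
        using that T mneg dc by simp
      show "a \<oplus>\<^bsub>M\<^esub> b \<in> Tset S M ract x" if "a \<in> Tset S M ract x" "b \<in> Tset S M ract x" for a b
        using that T madd dc by simp
      show "r \<odot>\<^bsub>M\<^esub> a \<in> Tset S M ract x" if "r \<in> carrier R" "a \<in> Tset S M ract x" for r a
        using that T rsc dc by simp
    qed
  next
    fix s m assume s: "s \<in> carrier S" and m: "m \<in> Tset S M ract x"
    show "lact s m \<in> Tset S M ract x"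
      using s m T comm dc cl lz by simp
    show "ract m s \<in> Tset S M ract x"
    proof -
      have mc: "m \<in> carrier M" and mt: "\<And>a. a \<in> carrier S \<Longrightarrow> ract m (?d a) = \<zero>\<^bsub>M\<^esub>"
        using m T by auto
      have "ract (ract m s) (?d a) = \<zero>\<^bsub>M\<^esub>" if a: "a \<in> carrier S" for a
      proof -
        have "ract (ract m s) (?d a) = ract m (s \<otimes>\<^bsub>S\<^esub> ?d a)"
          using sadd[of s "?d a" m] s a mc dc by simp
        also have "\<dots> = ract m ((\<ominus>\<^bsub>S\<^esub> ?d s) \<otimes>\<^bsub>S\<^esub> a) \<oplus>\<^bsub>M\<^esub> ract m (?d (s \<otimes>\<^bsub>S\<^esub> a))"
          using ident[OF s a] sadd s a mc dc assms(4) by simp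
        also have "\<dots> = \<zero>\<^bsub>M\<^esub>"
          using sadd s a mc dc mt rneg rz by (simp add: mz)
        finally show ?thesis .
      qed
      thus ?thesis using T mc s cl by simp
    qed
  qed
qed

end
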